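(* Consider the Robust protocol with parameters $k,\varepsilon,c$ (described in the context) and a single round of it that starts at event count $n_0$. Let $R$ be the number of events in the round and, for an event count $n$, let $\hat n$ denote the server's estimate when the event count is $n$. Then \[ \Pr\!\left[\max_{n\in[n_0,\,n_0+R-1]}\frac{|n-\hat n|}{n}>\varepsilon\right]\le 2\exp\!\left(-\min\!\left\{\frac{c^2}{8},\frac{c\sqrt k}{4}\right\}\right). \]
   Context: Distributed counting: a server and $k$ sites; events arrive one at a time, each at some site; $n_i$ is the number of events at site $i$ so far and the event count is $n=\sum_in_i$. Robust protocol with parameters $k$, $\varepsilon>0$, $c\ge1$: each site $i$ keeps a transmission probability $p$ (initially $1$, updated by server broadcasts) and its count $n_i$. On each event at site $i$: $n_i\gets n_i+1$, and independently with probability $p$ the site sends ReportSample to the server. On receiving CountRequest, site $i$ sends its current $n_i$. The server keeps a counter $B=0$, values $\bar n_i=0$, and $p=1$; its estimate is $\hat n=\bar n+B/p$ with $\bar n=\sum_i\bar n_i$. On receiving ReportSample the server sets $B\gets B+1$; if now $B=k$, the round ends and a new round begins: the server broadcasts CountRequest, sets each $\bar n_i$ to the reported exact $n_i$, sets $p\gets\min\{1,c\sqrt k/(\varepsilon\bar n)\}$, broadcasts $p$, and sets $B\gets0$. The probability is over the protocol's randomness during the round. *)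

theory Defs
  imports "HOL-Probability.Probability"
begin

text \<open>At the start of the round the server has the exact count n0 (from CountRequest),
  B = 0, and the transmission probability is p = min 1 (c sqrt k / (eps n0)).
  (For the very first round n0 = 0 and p = 1 is the initial value.)
  Each event of the round independently triggers ReportSample with probability p;
  omega i says whether the (i+1)-th event of the round sent ReportSample.
  Which site an event arrives at is irrelevant for these quantities.\<close>

definition robust_p :: "nat \<Rightarrow> real \<Rightarrow> real \<Rightarrow> nat \<Rightarrow> real" where
  "robust_p k eps c n0 = (if n0 = 0 then 1 else min 1 (c * sqrt (real k) / (eps * real n0)))"

definition round_space :: "real \<Rightarrow> (nat \<Rightarrow> bool) measure" where
  "round_space p = PiM UNIV (\<lambda>_::nat. measure_pmf (bernoulli_pmf p))"

definition samples :: "(nat \<Rightarrow> bool) \<Rightarrow> nat \<Rightarrow> nat" where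
  "samples \<omega> j = card {i. i < j \<and> \<omega> i}"

text \<open>R: the number of events in the round (the R-th event makes B = k and ends it).\<close>
definition round_len :: "nat \<Rightarrow> (nat \<Rightarrow> bool) \<Rightarrow> nat" where
  "round_len k \<omega> = (LEAST r. samples \<omega> r = k)"

definition estimate :: "nat \<Rightarrow> real \<Rightarrow> real \<Rightarrow> nat \<Rightarrow> (nat \<Rightarrow> bool) \<Rightarrow> nat \<Rightarrow> real" where
  "estimate k eps c n0 \<omega> j = real n0 + real (samples \<omega> j) / robust_p k eps c n0"

definition round_bad_event :: "nat \<Rightarrow> real \<Rightarrow> real \<Rightarrow> nat \<Rightarrow> (nat \<Rightarrow> bool) set" where
  "round_bad_event k eps c n0 =
     {\<omega> \<in> space (round_space (robust_p k eps c n0)).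
        \<exists>j < round_len k \<omega>.
          \<bar>real (n0 + j) - estimate k eps c n0 \<omega> j\<bar> / real (n0 + j) > eps}"

end

theory Submission
  imports Defs
begin

lemma space_round_space[simp]: "space (round_space p) = UNIV"
  unfolding round_space_def by (simp add: space_PiM)

lemma round_iter:
  assumes f[measurable]: "f \<in> borel_measurable (round_space p)"
  shows "(\<integral>\<^sup>+\<omega>. f \<omega> \<partial>round_space p) =
     (\<integral>\<^sup>+s. \<integral>\<^sup>+\<omega>. f (case_nat s \<omega>) \<partial>round_space p \<partial>measure_pmf (bernoulli_pmf p))"
proof -
  interpret S: sequence_space "measure_pmf (bernoulli_pmf p)"
    by unfold_locales
  interpret P: pair_sigma_finite "measure_pmf (bernoulli_pmf p)" "\<Pi>\<^sub>M i::nat\<in>UNIV. measure_pmf (bernoulli_pmf p)" ..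
  have f2[measurable]: "f \<in> borel_measurable S.S" using f unfolding round_space_def .
  have "(\<integral>\<^sup>+\<omega>. f \<omega> \<partial>round_space p) = (\<integral>\<^sup>+\<omega>. f \<omega> \<partial>S.S)" unfolding round_space_def ..
  also have "\<dots> = (\<integral>\<^sup>+X. f ((\<lambda>(s, \<omega>). case_nat s \<omega>) X) \<partial>(measure_pmf (bernoulli_pmf p) \<Otimes>\<^sub>M S.S))"
    by (subst S.PiM_iter[symmetric]) (simp add: nn_integral_distr)
  also have "\<dots> = (\<integral>\<^sup>+x. \<integral>\<^sup>+X. f ((\<lambda>(s, \<omega>). case_nat s \<omega>) (x, X)) \<partial>S.S \<partial>measure_pmf (bernoulli_pmf p))"
    by (subst S.nn_integral_fst) simp_all
  finally show ?thesis unfolding round_space_def by simp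
qed

lemma prob_round: "prob_space (round_space p)"
  unfolding round_space_def by (intro prob_space_PiM) (simp add: measure_pmf.prob_space_axioms)

definition Aset :: "(bool \<Rightarrow> real) \<Rightarrow> real \<Rightarrow> nat \<Rightarrow> real \<Rightarrow> (nat \<Rightarrow> bool) set" where
  "Aset g \<gamma> N x = {\<omega>. \<exists>j\<le>N. \<gamma> \<le> x + (\<Sum>i<j. g (\<omega> i))}"

lemma Aset_sets[measurable]: "Aset g \<gamma> N x \<in> sets (round_space p)"
proof -
  have "Aset g \<gamma> N x = {\<omega> \<in> space (round_space p). \<exists>j\<le>N. \<gamma> \<le> x + (\<Sum>i<j. g (\<omega> i))}"
    by (simp add: Aset_def)
  also have "\<dots> \<in> sets (round_space p)" unfolding round_space_def by measurable
  finally show ?thesis .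
qed

lemma sum_case_nat: "(\<Sum>i<Suc j. g (case_nat s \<omega> i)) = g s + (\<Sum>i<j. g (\<omega> i))"
  by (subst sum.lessThan_Suc_shift) simp

lemma Aset_Suc:
  assumes "x < \<gamma>"
  shows "case_nat s \<omega> \<in> Aset g \<gamma> (Suc N) x \<longleftrightarrow> \<omega> \<in> Aset g \<gamma> N (x + g s)"
proof
  assume "case_nat s \<omega> \<in> Aset g \<gamma> (Suc N) x"
  then obtain j where j: "j \<le> Suc N" "\<gamma> \<le> x + (\<Sum>i<j. g (case_nat s \<omega> i))" by (auto simp: Aset_def)
  then obtain j' where "j = Suc j'" using assms by (cases j) auto
  with j show "\<omega> \<in> Aset g \<gamma> N (x + g s)"
    unfolding Aset_def by (auto simp: sum_case_nat add.assoc simp del: sum.lessThan_Suc intro!: exI[of _ j'])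
next
  assume "\<omega> \<in> Aset g \<gamma> N (x + g s)"
  then obtain j where j: "j \<le> N" "\<gamma> \<le> x + g s + (\<Sum>i<j. g (\<omega> i))" by (auto simp: Aset_def)
  then show "case_nat s \<omega> \<in> Aset g \<gamma> (Suc N) x"
    unfolding Aset_def by (auto simp: sum_case_nat add.assoc simp del: sum.lessThan_Suc intro!: exI[of _ "Suc j"])
qed

lemma ville_finite:
  assumes p: "0 \<le> p" "p \<le> 1" and g: "p * exp (g True) + (1 - p) * exp (g False) \<le> 1"
  shows "emeasure (round_space p) (Aset g \<gamma> N x) \<le> ennreal (exp (x - \<gamma>))"
proof (induction N arbitrary: x)
  interpret prob_space "round_space p" by (rule prob_round)
  case 0
  show ?case
  proof (cases "\<gamma> \<le> x")
    case True
    have "emeasure (round_space p) (Aset g \<gamma> 0 x) \<le> 1" by (rule emeasure_le_1)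
    also have "1 \<le> ennreal (exp (x - \<gamma>))" using True by simp
    finally show ?thesis .
  next
    case False
    then have "Aset g \<gamma> 0 x = {}" by (auto simp: Aset_def)
    then show ?thesis by simp
  qed
next
  interpret prob_space "round_space p" by (rule prob_round)
  case (Suc N)
  show ?case
  proof (cases "\<gamma> \<le> x")
    case True
    have "emeasure (round_space p) (Aset g \<gamma> (Suc N) x) \<le> 1" by (rule emeasure_le_1)
    also have "1 \<le> ennreal (exp (x - \<gamma>))" using True by simp
    finally show ?thesis .
  next
    case False
    have "emeasure (round_space p) (Aset g \<gamma> (Suc N) x) =
       (\<integral>\<^sup>+\<omega>. indicator (Aset g \<gamma> (Suc N) x) \<omega> \<partial>round_space p)"
      by (simp add: nn_integral_indicator)
    also have "\<dots> = (\<integral>\<^sup>+s. \<integral>\<^sup>+\<omega>. indicator (Aset g \<gamma> (Suc N) x) (case_nat s \<omega>) \<partial>round_space p \<partial>measure_pmf (bernoulli_pmf p))"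
      by (rule round_iter) simp
    also have "\<dots> = (\<integral>\<^sup>+s. \<integral>\<^sup>+\<omega>. indicator (Aset g \<gamma> N (x + g s)) \<omega> \<partial>round_space p \<partial>measure_pmf (bernoulli_pmf p))"
      using False by (intro nn_integral_cong) (simp add: indicator_def Aset_Suc)
    also have "\<dots> = (\<integral>\<^sup>+s. emeasure (round_space p) (Aset g \<gamma> N (x + g s)) \<partial>measure_pmf (bernoulli_pmf p))"
      by (intro nn_integral_cong) (simp add: nn_integral_indicator)
    also have "\<dots> \<le> (\<integral>\<^sup>+s. ennreal (exp (x + g s - \<gamma>)) \<partial>measure_pmf (bernoulli_pmf p))"
      by (intro nn_integral_mono Suc.IH)
    also have "\<dots> = ennreal (exp (x + g True - \<gamma>)) * ennreal p + ennreal (exp (x + g False - \<gamma>)) * ennreal (1 - p)"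
      using p by simp
    also have "\<dots> = ennreal (exp (x - \<gamma>) * (p * exp (g True) + (1 - p) * exp (g False)))"
      using p by (simp add: ennreal_mult'[symmetric] ennreal_plus[symmetric] exp_add exp_diff field_simps del: ennreal_plus)
    also have "\<dots> \<le> ennreal (exp (x - \<gamma>))"
      using g by (intro ennreal_leI) (simp add: mult_left_le)
    finally show ?thesis .
  qed
qed

definition Eset :: "(bool \<Rightarrow> real) \<Rightarrow> real \<Rightarrow> (nat \<Rightarrow> bool) set" where
  "Eset g \<gamma> = {\<omega>. \<exists>j. \<gamma> \<le> (\<Sum>i<j. g (\<omega> i))}"

lemma Eset_union: "Eset g \<gamma> = (\<Union>N. Aset g \<gamma> N 0)"
  by (auto simp: Eset_def Aset_def)

lemma Eset_sets: "Eset g \<gamma> \<in> sets (round_space p)"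
  unfolding Eset_union by (intro sets.countable_UN) (auto simp: image_subset_iff Aset_sets)

lemma ville:
  assumes p: "0 \<le> p" "p \<le> 1" and g: "p * exp (g True) + (1 - p) * exp (g False) \<le> 1"
  shows "measure (round_space p) (Eset g \<gamma>) \<le> exp (- \<gamma>)"
proof -
  interpret prob_space "round_space p" by (rule prob_round)
  have inc: "incseq (\<lambda>N. Aset g \<gamma> N 0)"
    by (auto simp: incseq_def Aset_def) (meson order_trans)
  have "emeasure (round_space p) (Eset g \<gamma>) = (SUP N. emeasure (round_space p) (Aset g \<gamma> N 0))"
    unfolding Eset_union by (rule SUP_emeasure_incseq[symmetric]) (simp_all add: inc image_subset_iff Aset_sets)
  also have "\<dots> \<le> ennreal (exp (0 - \<gamma>))"
    by (intro SUP_least ville_finite[OF p g])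
  finally show ?thesis
    by (simp add: emeasure_eq_measure)
qed

lemma samples_Suc: "samples \<omega> (Suc j) = samples \<omega> j + (if \<omega> j then 1 else 0)"
proof -
  have "{i. i < Suc j \<and> \<omega> i} = {i. i < j \<and> \<omega> i} \<union> (if \<omega> j then {j} else {})"
    by (auto simp: less_Suc_eq)
  then show ?thesis unfolding samples_def by (simp add: card_insert_if)
qed

lemma samples_0[simp]: "samples \<omega> 0 = 0" by (simp add: samples_def)

lemma sum_samples: "(\<Sum>i<j. (if \<omega> i then \<theta> else 0) - q) = \<theta> * real (samples \<omega> j) - real j * q"
  by (induction j) (auto simp: samples_Suc algebra_simps)

lemma samples_le: "samples \<omega> j \<le> j"
  by (induction j) (auto simp: samples_Suc)

lemma samples_all: "(\<And>i. i < j \<Longrightarrow> \<omega> i) \<Longrightarrow> samples \<omega> j = j"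
  by (induction j) (auto simp: samples_Suc)

lemma samples_hit: "k \<le> samples \<omega> j \<Longrightarrow> \<exists>r\<le>j. samples \<omega> r = k"
proof (induction j)
  case 0 then show ?case by simp
next
  case (Suc j)
  show ?case
  proof (cases "k \<le> samples \<omega> j")
    case True then show ?thesis using Suc.IH le_SucI by blast
  next
    case False
    then have "samples \<omega> (Suc j) = k" using Suc.prems by (auto simp: samples_Suc split: if_splits)
    then show ?thesis by blast
  qed
qed

lemma samples_lt_round: "j < round_len k \<omega> \<Longrightarrow> samples \<omega> j < k"
proof (rule ccontr)
  assume "j < round_len k \<omega>" "\<not> samples \<omega> j < k"
  then obtain r where "r \<le> j" "samples \<omega> r = k" using samples_hit by (meson not_less)
  then have "round_len k \<omega> \<le> r" unfolding round_len_def by (rule_tac Least_le) 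
  with \<open>r \<le> j\<close> \<open>j < round_len k \<omega>\<close> show False by simp
qed



lemma final_over:
  fixes a s :: real assumes "a > 0" "s > 0"
  shows "min ((a* s)^2/8) (a* s* s/4) \<le> a* s* s*min (a/4) (1/2) - s^2 * (min (a/4) (1/2))^2"
proof (cases "a \<le> 2")
  case True
  then have "min (a/4) (1/2) = a/4" by simp
  moreover have "0 \<le> a*(a*(s* s))" using assms by simp
  then have "(a* s)^2/8 \<le> a* s* s*(a/4) - s^2*(a/4)^2" by (simp add: power2_eq_square algebra_simps)
  ultimately show ?thesis by (metis min.coboundedI1)
next
  case False
  then have "min (a/4) (1/2) = 1/2" by simp
  moreover have "1*(s* s) \<le> a*(s* s)" using False by (intro mult_right_mono) auto
  then have "a* s* s/4 \<le> a* s* s*(1/2) - s^2*(1/2)^2"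
    by (simp add: power2_eq_square algebra_simps)
  ultimately show ?thesis by simp
qed

lemma ineq_over:
  fixes k c S q :: real
  assumes k: "k > 0" and c: "c > 0" and S: "0 \<le> S" "S \<le> k" and q: "q \<le> S - c* sqrt k"
  shows "min (c^2/8) (c* sqrt k/4) \<le> min (c / sqrt k / 4) (1/2) * S - q*(exp (min (c / sqrt k / 4) (1/2)) - 1)"
proof -
  define s where "s = sqrt k"
  define a where "a = c / s"
  define x where "x = min (a/4) (1/2)"
  have s: "s > 0" "k = s^2" using k by (auto simp: s_def)
  have a: "a > 0" "c = a * s" using s c by (auto simp: a_def)
  have x: "0 \<le> x" "x \<le> 1" using a by (auto simp: x_def)
  have e1: "x \<le> exp x - 1" using exp_ge_add_one_self[of x] by linarith
  have e2: "exp x \<le> 1 + x + x^2" using exp_bound[OF x] .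
  have "x*S - q*(exp x - 1) \<ge> x*S - (S - c* s)*(exp x - 1)"
    using q e1 x unfolding s_def by (intro diff_left_mono mult_right_mono) auto
  moreover have "x*S - (S - c* s)*(exp x - 1) = c* s*(exp x - 1) - S*(exp x - 1 - x)"
    by (simp add: algebra_simps)
  moreover have "S*(exp x - 1 - x) \<le> k*(exp x - 1 - x)"
    using S e1 by (intro mult_right_mono) auto
  moreover have "k*(exp x - 1 - x) \<le> k * x^2" using k e2 by (intro mult_left_mono) auto
  moreover have "c* s*x \<le> c* s*(exp x - 1)" using c s e1 by (intro mult_left_mono) auto
  ultimately have "x*S - q*(exp x - 1) \<ge> c* s*x - k*x^2" by linarith
  moreover have "min (c^2/8) (c* s/4) \<le> c* s*x - k*x^2"
    using final_over[OF a(1) s(1)] unfolding x_def a(2) s(2) by simp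
  ultimately show ?thesis unfolding x_def a_def s_def by linarith
qed

lemma final_under:
  fixes a s :: real assumes "a > 0" "s > 0"
  shows "min ((a* s)^2/8) (a* s* s/4) \<le> s^2 * min (a/4) (1/2) * (a - min (a/4) (1/2)) / (1 + min (a/4) (1/2))"
proof (cases "a \<le> 2")
  case True
  then have "min (a/4) (1/2) = a/4" by simp
  moreover have "(a* s)^2/8 \<le> s^2 * (a/4) * (a - a/4) / (1 + a/4)"
    using True assms by (simp add: power2_eq_square field_simps mult_right_mono)
  ultimately show ?thesis by simp
next
  case False
  then have "min (a/4) (1/2) = 1/2" by simp
  moreover have "a* s* s/4 \<le> s^2 * (1/2) * (a - 1/2) / (1 + 1/2)"
    using False assms by (simp add: power2_eq_square field_simps mult_right_mono)
  ultimately show ?thesis by simp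
qed

lemma ineq_under:
  fixes k c S q :: real
  assumes k: "k > 0" and c: "c > 0" and S: "0 \<le> S" "S \<le> k" and q: "S + c* sqrt k \<le> q"
  shows "min (c^2/8) (c* sqrt k/4) \<le> - min (c / sqrt k / 4) (1/2) * S - q*(exp (- min (c / sqrt k / 4) (1/2)) - 1)"
proof -
  define s where "s = sqrt k"
  define a where "a = c / s"
  define x where "x = min (a/4) (1/2)"
  have s: "s > 0" "k = s^2" using k by (auto simp: s_def)
  have a: "a > 0" "c = a * s" using s c by (auto simp: a_def)
  have x: "0 < x" "x \<le> 1" using a by (auto simp: x_def)
  define e where "e = exp (-x)"
  have e0: "1 - x \<le> e" using exp_ge_add_one_self[of "-x"] by (simp add: e_def)
  have "1 + x \<le> exp x" by simp
  then have "e \<le> 1 / (1 + x)" unfolding e_def using x by (simp add: exp_minus field_simps)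
  then have e1: "x / (1 + x) \<le> 1 - e" using x by (simp add: field_simps)
  have "1 - e \<ge> 0" using e1 x by (smt (verit) divide_nonneg_pos)
  moreover have "0 \<le> (q - (S + c* s))*(1-e)" using q unfolding s_def using \<open>1 - e \<ge> 0\<close> by (intro mult_nonneg_nonneg) auto
  ultimately have "-x*S - q*(e - 1) \<ge> -x*S + (S + c* s)*(1 - e)"
    by (simp add: algebra_simps)
  moreover have "-x*S + (S + c* s)*(1 - e) = c* s*(1 - e) - S*(x - 1 + e)"
    by (simp add: algebra_simps)
  moreover have "S*(x - 1 + e) \<le> k*(x - 1 + e)"
    using S e0 by (intro mult_right_mono) auto
  moreover have "(c* s + k)*(x/(1+x)) \<le> (c* s + k)*(1 - e)"
    using c s k e1 by (intro mult_left_mono) auto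
  moreover have "(c* s + k)*(x/(1+x)) - k*x = s^2 * x * (a - x) / (1 + x)"
    using x unfolding a(2) s(2) by (simp add: field_simps power2_eq_square)
  ultimately have "-x*S - q*(e - 1) \<ge> s^2 * x * (a - x) / (1 + x)" by (simp add: algebra_simps)
  moreover have "min (c^2/8) (c* s/4) \<le> s^2 * x * (a - x) / (1 + x)"
    using final_under[OF a(1) s(1)] unfolding x_def a(2) by simp
  ultimately show ?thesis unfolding x_def a_def s_def e_def by linarith
qed


lemma samples_sum: "samples \<omega> j = (\<Sum>i<j. if \<omega> i then 1 else 0)"
  by (induction j) (auto simp: samples_Suc)

lemma bad_sets: "round_bad_event k eps c n0 \<in> sets (round_space p')"
proof -
  have "round_bad_event k eps c n0 = {\<omega> \<in> space (round_space p'). \<exists>j. j < (LEAST r. (\<Sum>i<r. if \<omega> i then 1 else 0) = k) \<and>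
          \<bar>real (n0 + j) - (real n0 + real (\<Sum>i<j. if \<omega> i then 1 else 0) / robust_p k eps c n0)\<bar> / real (n0 + j) > eps}"
    by (simp add: round_bad_event_def round_len_def estimate_def samples_sum)
  also have "\<dots> \<in> sets (round_space p')" unfolding round_space_def by measurable
  finally show ?thesis .
qed

lemma g_cond:
  fixes p \<theta> :: real
  assumes "0 \<le> p" "p \<le> 1"
  shows "p * exp ((if True then \<theta> else 0) - p * (exp \<theta> - 1)) + (1 - p) * exp ((if False then \<theta> else 0) - p * (exp \<theta> - 1)) \<le> 1"
proof -
  define y where "y = p * (exp \<theta> - 1)"
  have "p * exp ((if True then \<theta> else 0) - p * (exp \<theta> - 1)) + (1 - p) * exp ((if False then \<theta> else 0) - p * (exp \<theta> - 1))
      = p * exp (\<theta> - y) + (1 - p) * exp (-y)" by (simp only: y_def if_True if_False diff_0)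
  also have "\<dots> = (p * exp \<theta> + (1 - p)) * exp (-y)"
    using exp_add[of \<theta> "-y"] by (simp add: algebra_simps)
  also have "\<dots> = (1 + y) * exp (-y)" by (simp add: y_def algebra_simps)
  also have "\<dots> \<le> exp y * exp (-y)" by (intro mult_right_mono) auto
  also have "\<dots> = 1" by (simp add: exp_minus)
  finally show ?thesis .
qed

theorem mainTheorem8:
  fixes k n0 :: nat and eps c :: real
  assumes "k \<ge> 1" and "eps > 0" and "c \<ge> 1"
  shows "round_bad_event k eps c n0 \<in> sets (round_space (robust_p k eps c n0)) \<and>
         measure (round_space (robust_p k eps c n0)) (round_bad_event k eps c n0)
           \<le> 2 * exp (- min (c^2 / 8) (c * sqrt (real k) / 4))"
proof
  show "round_bad_event k eps c n0 \<in> sets (round_space (robust_p k eps c n0))" by (rule bad_sets)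
  define p where "p = robust_p k eps c n0"
  define \<gamma> where "\<gamma> = min (c^2 / 8) (c * sqrt (real k) / 4)"
  define B where "B = round_bad_event k eps c n0"
  interpret prob_space "round_space p" by (rule prob_round)
  have Bs: "B \<in> sets (round_space p)" unfolding B_def by (rule bad_sets)
  have k0: "real k > 0" using assms by simp
  have c0: "c > 0" using assms by simp
  have \<gamma>0: "\<gamma> \<ge> 0" using c0 k0 by (simp add: \<gamma>_def)
  have p0: "0 < p" "p \<le> 1" using assms by (auto simp: p_def robust_p_def)
  have Bj: "\<exists>j. samples \<omega> j < k \<and> \<bar>real (n0 + j) - (real n0 + real (samples \<omega> j) / p)\<bar> / real (n0 + j) > eps"
    if "\<omega> \<in> B" for \<omega>
    using that samples_lt_round unfolding B_def round_bad_event_def estimate_def p_def by blast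
  show "measure (round_space p) B \<le> 2 * exp (- \<gamma>)"
  proof (cases "p = 1")
    case True
    define g where "g = (\<lambda>b::bool. if b then 0 else \<gamma>)"
    have "B \<subseteq> Eset g \<gamma>"
    proof
      fix \<omega> assume "\<omega> \<in> B"
      then obtain j where j: "\<bar>real (n0 + j) - (real n0 + real (samples \<omega> j) / p)\<bar> / real (n0 + j) > eps"
        using Bj by blast
      then have "samples \<omega> j \<noteq> j" using True assms by auto
      then obtain i where i: "i < j" "\<not> \<omega> i" using samples_all by blast
      have "g (\<omega> i) \<le> (\<Sum>i<j. g (\<omega> i))"
        using i \<gamma>0 by (intro member_le_sum) (auto simp: g_def)
      then show "\<omega> \<in> Eset g \<gamma>" using i by (auto simp: Eset_def g_def)
    qed
    then have "measure (round_space p) B \<le> measure (round_space p) (Eset g \<gamma>)"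
      by (intro finite_measure_mono Eset_sets)
    also have "\<dots> \<le> exp (- \<gamma>)" using True by (intro ville) (auto simp: g_def)
    finally show ?thesis using exp_gt_zero[of "-\<gamma>"] by linarith
  next
    case False
    then have n0: "n0 > 0" and pe: "p = c * sqrt k / (eps * n0)"
      unfolding p_def robust_p_def by (auto split: if_splits simp: min_def)
    then have pen: "p * eps * n0 = c * sqrt k" using assms by (simp add: field_simps)
    define x where "x = min (c / sqrt k / 4) (1/2)"
    define g1 where "g1 = (\<lambda>b::bool. (if b then x else 0) - p * (exp x - 1))"
    define g2 where "g2 = (\<lambda>b::bool. (if b then -x else 0) - p * (exp (-x) - 1))"
    have "B \<subseteq> Eset g1 \<gamma> \<union> Eset g2 \<gamma>"
    proof
      fix \<omega> assume "\<omega> \<in> B"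
      then obtain j where Sk: "samples \<omega> j < k" and
        j: "\<bar>real (n0 + j) - (real n0 + real (samples \<omega> j) / p)\<bar> / real (n0 + j) > eps"
        using Bj by blast
      define S where "S = real (samples \<omega> j)"
      define J where "J = real j"
      have S: "0 \<le> S" "S \<le> real k" using Sk by (auto simp: S_def)
      have D: "real n0 + J > 0" using n0 by (simp add: J_def)
      have j': "\<bar>J - S / p\<bar> > eps * (real n0 + J)"
        using j D by (simp add: J_def S_def field_simps)
      have lo: "p * eps * (real n0 + J) \<ge> c * sqrt k"
        using pen p0 assms by (simp add: J_def algebra_simps)
      have sum1: "(\<Sum>i<j. g1 (\<omega> i)) = x * S - (p * J) * (exp x - 1)"
        unfolding g1_def sum_samples S_def J_def by simp
      have sum2: "(\<Sum>i<j. g2 (\<omega> i)) = - x * S - (p * J) * (exp (-x) - 1)"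
        unfolding g2_def sum_samples S_def J_def by simp
      show "\<omega> \<in> Eset g1 \<gamma> \<union> Eset g2 \<gamma>"
      proof (cases "J \<le> S / p")
        case True
        then have "S / p - J > eps * (real n0 + J)" using j' by simp
        then have "p * (S / p - J) > p * (eps * (real n0 + J))" using p0 by simp
        then have "S - p * J > p * eps * (real n0 + J)" using p0 by (simp add: algebra_simps)
        then have "p * J \<le> S - c * sqrt k" using lo by simp
        then have "\<gamma> \<le> (\<Sum>i<j. g1 (\<omega> i))"
          unfolding sum1 \<gamma>_def x_def using ineq_over[OF k0 c0 S] by simp
        then show ?thesis by (auto simp: Eset_def)
      next
        case False
        then have "J - S / p > eps * (real n0 + J)" using j' by simp
        then have "p * (J - S / p) > p * (eps * (real n0 + J))" using p0 by simp
        then have "p * J - S > p * eps * (real n0 + J)" using p0 by (simp add: algebra_simps)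
        then have "S + c * sqrt k \<le> p * J" using lo by simp
        then have "\<gamma> \<le> (\<Sum>i<j. g2 (\<omega> i))"
          unfolding sum2 \<gamma>_def x_def using ineq_under[OF k0 c0 S] by simp
        then show ?thesis by (auto simp: Eset_def)
      qed
    qed
    then have "measure (round_space p) B \<le> measure (round_space p) (Eset g1 \<gamma> \<union> Eset g2 \<gamma>)"
      by (intro finite_measure_mono) (auto intro: Eset_sets)
    also have "\<dots> \<le> measure (round_space p) (Eset g1 \<gamma>) + measure (round_space p) (Eset g2 \<gamma>)"
      by (intro measure_Un_le Eset_sets)
    also have "\<dots> \<le> exp (- \<gamma>) + exp (- \<gamma>)"
      using p0 g_cond[of p x] g_cond[of p "-x"]
      by (intro add_mono ville) (auto simp: g1_def g2_def)
    finally show ?thesis by simp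
  qed
qed

end
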